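(* Let $f\colon I\to I$ be continuous and $k\ge1$, and assume $\mathrm{Per}(f,k)$ is a Cantor set. Fix $x\in\mathrm{Per}(f,k)$ and $\varepsilon>0$, and let $\mu_x$ be the unique $f$-invariant Borel probability measure supported on the orbit of $x$. Then there is a non-atomic Borel probability measure $\nu$ supported on $\mathrm{Per}(f,k)$ such that $D(\mu_x,\nu)<\varepsilon$.
   Context: $I=[0,1]$. $\mathrm{Per}(f,k)=\{x: f^k(x)=x,\ f^i(x)\ne x,\ 1\le i<k\}$. For $A\subset I$, $B(A,\varepsilon)=\{y\in I: |y-a|<\varepsilon \text{ for some } a\in A\}$. The Prohorov metric on Borel probability measures on $I$ is $D(\mu,\nu)=\inf\{\varepsilon>0: \mu(A)\le\nu(B(A,\varepsilon))+\varepsilon \text{ and } \nu(A)\le\mu(B(A,\varepsilon))+\varepsilon \text{ for all Borel } A\subset I\}$. A Cantor set is a nonempty compact, perfect, totally disconnected set. *)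

theory Defs
  imports "HOL-Probability.Probability"
begin

definition unitI :: "real set" where "unitI = {0..1}"

definition Per :: "(real \<Rightarrow> real) \<Rightarrow> nat \<Rightarrow> real set" where
  "Per f k = {x \<in> unitI. (f ^^ k) x = x \<and> (\<forall>i. 1 \<le> i \<and> i < k \<longrightarrow> (f ^^ i) x \<noteq> x)}"

definition orbit :: "(real \<Rightarrow> real) \<Rightarrow> real \<Rightarrow> real set" where
  "orbit f x = {(f ^^ n) x | n. True}"

definition cantor_set :: "real set \<Rightarrow> bool" where
  "cantor_set S \<longleftrightarrow> S \<noteq> {} \<and> compact S \<and> (\<forall>x\<in>S. x islimpt S)
     \<and> (\<forall>C. C \<subseteq> S \<and> connected C \<longrightarrow> (\<forall>a\<in>C. \<forall>b\<in>C. a = b))"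

abbreviation borelI :: "real measure" where "borelI \<equiv> restrict_space borel unitI"

definition is_prob_I :: "real measure \<Rightarrow> bool" where
  "is_prob_I M \<longleftrightarrow> prob_space M \<and> sets M = sets borelI"

definition Bnbhd :: "real set \<Rightarrow> real \<Rightarrow> real set" where
  "Bnbhd A e = {y \<in> unitI. \<exists>a\<in>A. \<bar>y - a\<bar> < e}"

definition prohorov :: "real measure \<Rightarrow> real measure \<Rightarrow> real" where
  "prohorov \<mu> \<nu> = Inf {e. e > 0 \<and> (\<forall>A \<in> sets borelI.
       measure \<mu> A \<le> measure \<nu> (Bnbhd A e) + e \<and> measure \<nu> A \<le> measure \<mu> (Bnbhd A e) + e)}"

definition f_invariant :: "(real \<Rightarrow> real) \<Rightarrow> real measure \<Rightarrow> bool" where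
  "f_invariant f M \<longleftrightarrow> (\<forall>A \<in> sets M. measure M (f -` A \<inter> unitI) = measure M A)"

end

theory Submission imports Defs begin

primrec nodeL :: "(real \<times> real \<Rightarrow> bool \<Rightarrow> real \<times> real) \<Rightarrow> real \<times> real \<Rightarrow> bool list \<Rightarrow> real \<times> real" where
  "nodeL ch z0 [] = z0"
| "nodeL ch z0 (b # s) = ch (nodeL ch z0 s) b"

primrec pre :: "(nat \<Rightarrow> bool) \<Rightarrow> nat \<Rightarrow> bool list" where
  "pre w 0 = []"
| "pre w (Suc n) = w n # pre w n"

lemma length_pre[simp]: "length (pre w n) = n"
  by (induct n) auto

lemma pre_agree: "(\<forall>j<n. w j = w' j) \<Longrightarrow> pre w n = pre w' n"
  by (induct n) auto

abbreviation "Om \<equiv> PiM UNIV (\<lambda>_::nat. measure_pmf (bernoulli_pmf (1/2)))"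

lemma space_Om[simp]: "space Om = UNIV"
  by (auto simp: space_PiM)

lemma prob_Om: "prob_space Om"
  by (rule prob_space_PiM) (simp add: prob_space_measure_pmf)

lemma pre_meas: "(\<lambda>w. pre w n) \<in> measurable Om (count_space UNIV)"
proof (induct n)
  case 0 then show ?case by simp
next
  case (Suc n)
  have "(\<lambda>w. (\<lambda>s w. w n # s) (pre w n) w) \<in> measurable Om (count_space UNIV)"
  proof (rule measurable_compose_countable'[OF _ Suc])
    fix s :: "bool list"
    have "(\<lambda>w. w n) \<in> measurable Om (measure_pmf (bernoulli_pmf (1/2)))"
      by (rule measurable_component_singleton) simp
    moreover have "(\<lambda>b. b # s) \<in> measurable (measure_pmf (bernoulli_pmf (1/2))) (count_space UNIV)"
      by simp
    ultimately show "(\<lambda>w. w n # s) \<in> measurable Om (count_space UNIV)"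
      using measurable_compose by blast
  qed simp
  then show ?case by simp
qed

lemma split_ex:
  fixes K :: "real set"
  assumes "\<forall>x\<in>K. x islimpt K" "c \<in> K" "\<rho> > 0"
  shows "\<exists>a b. fst a \<in> K \<and> 0 < snd a \<and> snd a \<le> \<rho>/2 \<and> cball (fst a) (snd a) \<subseteq> cball c \<rho>
           \<and> fst b \<in> K \<and> 0 < snd b \<and> snd b \<le> \<rho>/2 \<and> cball (fst b) (snd b) \<subseteq> cball c \<rho>
           \<and> cball (fst a) (snd a) \<inter> cball (fst b) (snd b) = {}"
proof -
  obtain c' where c': "c' \<in> K" "c' \<noteq> c" "dist c' c < \<rho>/2"
    using assms islimpt_approachable[of c K] by (metis half_gt_zero)
  define d where "d = dist c' c"
  have d: "d > 0" using c' d_def by simp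
  define s where "s = min (d/3) (\<rho>/4)"
  have s: "s > 0" "s \<le> d/3" "s \<le> \<rho>/4" using d assms by (auto simp: s_def)
  have 1: "cball c s \<subseteq> cball c \<rho>" using s assms by (auto simp: subset_cball)
  have 2: "cball c' s \<subseteq> cball c \<rho>"
  proof
    fix y assume "y \<in> cball c' s"
    then have "dist c' y \<le> s" by simp
    then show "y \<in> cball c \<rho>" using c' s dist_triangle[of c y c'] by (auto simp: dist_commute)
  qed
  have 3: "cball c s \<inter> cball c' s = {}"
  proof (rule ccontr)
    assume "cball c s \<inter> cball c' s \<noteq> {}"
    then obtain y where "dist c y \<le> s" "dist c' y \<le> s" by auto
    then have "d \<le> 2 * s" using dist_triangle[of c' c y] d_def by (auto simp: dist_commute)
    then show False using s d by simp
  qed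
  show ?thesis
    apply (rule exI[of _ "(c, s)"], rule exI[of _ "(c', s)"])
    using 1 2 3 s assms c' by auto
qed

lemma cantor_embed:
  fixes K :: "real set"
  assumes K: "closed K" and perf: "\<forall>x\<in>K. x islimpt K" and p: "p \<in> K" and r: "r > 0"
  shows "\<exists>\<phi>. \<phi> \<in> borel_measurable Om \<and> inj \<phi> \<and> (\<forall>w. \<phi> w \<in> K \<and> dist (\<phi> w) p < r)"
proof -
  define good where "good z a \<longleftrightarrow> fst a \<in> K \<and> 0 < snd a \<and> snd a \<le> snd z/2
       \<and> cball (fst a) (snd a) \<subseteq> cball (fst z) (snd z)" for z a :: "real \<times> real"
  have "\<forall>z. \<exists>q. fst z \<in> K \<and> 0 < snd z \<longrightarrow> good z (q False) \<and> good z (q True)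
         \<and> cball (fst (q False)) (snd (q False)) \<inter> cball (fst (q True)) (snd (q True)) = {}"
  proof
    fix z :: "real \<times> real"
    show "\<exists>q. fst z \<in> K \<and> 0 < snd z \<longrightarrow> good z (q False) \<and> good z (q True)
         \<and> cball (fst (q False)) (snd (q False)) \<inter> cball (fst (q True)) (snd (q True)) = {}"
    proof (cases "fst z \<in> K \<and> 0 < snd z")
      case True
      then obtain a b where ab: "fst a \<in> K \<and> 0 < snd a \<and> snd a \<le> snd z/2 \<and> cball (fst a) (snd a) \<subseteq> cball (fst z) (snd z)
           \<and> fst b \<in> K \<and> 0 < snd b \<and> snd b \<le> snd z/2 \<and> cball (fst b) (snd b) \<subseteq> cball (fst z) (snd z)
           \<and> cball (fst a) (snd a) \<inter> cball (fst b) (snd b) = {}"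
        using split_ex[OF perf, of "fst z" "snd z"] by blast
      show ?thesis
        by (rule exI[of _ "\<lambda>t. if t then b else a"]) (use ab in \<open>auto simp: good_def\<close>)
    qed auto
  qed
  then obtain ch where ch: "\<And>z. fst z \<in> K \<Longrightarrow> 0 < snd z \<Longrightarrow> good z (ch z False) \<and> good z (ch z True)
         \<and> cball (fst (ch z False)) (snd (ch z False)) \<inter> cball (fst (ch z True)) (snd (ch z True)) = {}"
    by metis
  define N where "N s = nodeL ch (p, r/2) s" for s
  define cb where "cb s = cball (fst (N s)) (snd (N s))" for s
  have inv: "fst (N s) \<in> K \<and> 0 < snd (N s) \<and> snd (N s) \<le> r/2/2^length s" for s
  proof (induct s)
    case Nil then show ?case using p r by (simp add: N_def)
  next
    case (Cons b s)
    have "good (N s) (N (b # s))" using ch[of "N s"] Cons by (cases b) (auto simp: N_def)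
    then show ?case using Cons by (auto simp: good_def)
  qed
  have sub: "cb (b # s) \<subseteq> cb s" for b s
  proof -
    have "good (N s) (N (b # s))" using ch[of "N s"] inv[of s] by (cases b) (auto simp: N_def)
    then show ?thesis by (simp add: good_def cb_def)
  qed
  have disj: "cb (True # s) \<inter> cb (False # s) = {}" for s
    using ch[of "N s"] inv[of s] by (auto simp: N_def cb_def)
  have nest: "cb (pre w m) \<subseteq> cb (pre w n)" if "n \<le> m" for w m n
    using that
  proof (induct rule: dec_induct)
    case base then show ?case by simp
  next
    case (step m) then show ?case using sub[of "w m" "pre w m"] by auto
  qed
  define C where "C n w = fst (N (pre w n))" for n w
  have Cin: "C m w \<in> cb (pre w n)" if "n \<le> m" for w m n
  proof -
    have "C m w \<in> cb (pre w m)" using inv[of "pre w m"] by (simp add: C_def cb_def less_imp_le)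
    then show ?thesis using nest[OF that, of w] by blast
  qed
  have Cdist: "dist (C m w) (C n w) \<le> r/2/2^n" if "n \<le> m" for w m n
    using Cin[OF that, of w] inv[of "pre w n"] by (auto simp: C_def cb_def dist_commute)
  have conv: "convergent (\<lambda>n. C n w)" for w
  proof -
    have "Cauchy (\<lambda>n. C n w)"
    proof (rule metric_CauchyI)
      fix e :: real assume e: "e > 0"
      obtain M where M: "(1/2::real)^M < e/r" using real_arch_pow_inv[of "e/r" "1/2"] e r by auto
      have "r/2/2^M < e/2" using M r by (simp add: field_simps power_divide)
      moreover have "dist (C m w) (C n w) \<le> dist (C m w) (C M w) + dist (C n w) (C M w)" for m n
        using dist_triangle2 by blast
      ultimately show "\<exists>M. \<forall>m\<ge>M. \<forall>n\<ge>M. dist (C m w) (C n w) < e"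
      proof (intro exI allI impI)
        fix m n assume "M \<le> m" "M \<le> n"
        then have "dist (C m w) (C M w) \<le> r/2/2^M" "dist (C n w) (C M w) \<le> r/2/2^M"
          using Cdist by auto
        then show "dist (C m w) (C n w) < e"
          using \<open>r/2/2^M < e/2\<close> dist_triangle2[of "C m w" "C n w" "C M w"] by linarith
      qed
    qed
    then show ?thesis by (simp add: Cauchy_convergent_iff)
  qed
  define \<phi> where "\<phi> w = lim (\<lambda>n. C n w)" for w
  have lim: "(\<lambda>n. C n w) \<longlonglongrightarrow> \<phi> w" for w
    using conv[of w] by (simp add: \<phi>_def convergent_LIMSEQ_iff)
  have phicb: "\<phi> w \<in> cb (pre w n)" for w n
  proof (rule Lim_in_closed_set[OF _ _ _ lim])
    show "\<forall>\<^sub>F x in sequentially. C x w \<in> cb (pre w n)"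
      using Cin by (auto intro!: eventually_sequentiallyI[of n])
  qed (auto simp: cb_def)
  have phiK: "\<phi> w \<in> K" for w
    by (rule Lim_in_closed_set[OF K _ _ lim]) (auto simp: C_def inv)
  have phip: "dist (\<phi> w) p < r" for w
    using phicb[of w 0] r by (auto simp: cb_def N_def dist_commute)
  have injphi: "inj \<phi>"
  proof (rule injI, rule ccontr)
    fix w w' assume eq: "\<phi> w = \<phi> w'" and ne: "w \<noteq> w'"
    then have "\<exists>i. w i \<noteq> w' i" by auto
    then obtain n where n: "w n \<noteq> w' n" "\<forall>j<n. w j = w' j"
      using exists_least_iff[of "\<lambda>i. w i \<noteq> w' i"] by auto
    have pe: "pre w n = pre w' n" using pre_agree n(2) by blast
    have a: "\<phi> w \<in> cb (w n # pre w n)" using phicb[of w "Suc n"] by simp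
    have b: "\<phi> w' \<in> cb (w' n # pre w n)" using phicb[of w' "Suc n"] pe by simp
    show False using a b eq disj[of "pre w n"] n(1) by (cases "w n") auto
  qed
  have meas: "\<phi> \<in> borel_measurable Om"
  proof (rule borel_measurable_LIMSEQ_real[OF lim])
    fix n
    have "(\<lambda>s. fst (N s)) \<in> measurable (count_space UNIV) borel" by simp
    then show "(\<lambda>w. C n w) \<in> borel_measurable Om"
      unfolding C_def using measurable_compose[OF pre_meas] by blast
  qed
  show ?thesis using meas injphi phiK phip by blast
qed


lemma Om_single: "measure Om {w0} = 0"
proof -
  interpret prob_space Om by (rule prob_Om)
  have le: "measure Om {w0} \<le> (1/2)^n" for n
  proof -
    define E where "E = prod_emb UNIV (\<lambda>_::nat. measure_pmf (bernoulli_pmf (1/2))) {..<n} (PiE {..<n} (\<lambda>i. {w0 i}))"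
    have Es: "E \<in> sets Om" unfolding E_def by (rule sets_PiM_I) auto
    have "{w0} \<subseteq> E" by (auto simp: E_def prod_emb_def)
    then have 1: "measure Om {w0} \<le> measure Om E" using Es by (rule finite_measure_mono)
    have "emeasure Om E = (\<Prod>i\<in>{..<n}. emeasure (measure_pmf (bernoulli_pmf (1/2))) {w0 i})"
      unfolding E_def by (rule emeasure_PiM_emb) (auto simp: prob_space_measure_pmf)
    also have "\<dots> = (\<Prod>i\<in>{..<n}. ennreal (1/2))"
      by (intro prod.cong refl) (auto simp: emeasure_pmf_single pmf_bernoulli_True pmf_bernoulli_False split: bool.split)
    also have "\<dots> = ennreal ((1/2)^n)" by (subst prod_ennreal) auto
    finally have "measure Om E = (1/2)^n" by (simp add: measure_def)
    then show ?thesis using 1 by simp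
  qed
  show ?thesis
  proof (rule ccontr)
    assume "measure Om {w0} \<noteq> 0"
    then have pos: "measure Om {w0} > 0" using measure_nonneg[of Om "{w0}"] by linarith
    obtain n where "(1/2::real)^n < measure Om {w0}" using real_arch_pow_inv[OF pos, of "1/2"] by auto
    then show False using le[of n] by simp
  qed
qed


lemma mixture:
  fixes Ob :: "real set" and w :: "real \<Rightarrow> real" and N :: "real \<Rightarrow> real measure"
  assumes fin: "finite Ob" and wpos: "\<And>q. q\<in>Ob \<Longrightarrow> w q \<ge> 0" and wsum: "sum w Ob = 1"
    and Np: "\<And>q. q \<in> Ob \<Longrightarrow> prob_space (N q)" and Ns: "\<And>q. q\<in>Ob \<Longrightarrow> sets (N q) = sets borelI"
  shows "\<exists>\<nu>. is_prob_I \<nu> \<and> (\<forall>A \<in> sets borelI. measure \<nu> A = (\<Sum>q\<in>Ob. w q * measure (N q) A))"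
proof -
  define mix where "mix A = (\<Sum>q\<in>Ob. ennreal (w q) * emeasure (N q) A)" for A
  define \<nu> where "\<nu> = measure_of (space borelI) (sets borelI) mix"
  have sets\<nu>: "sets \<nu> = sets borelI" by (simp add: \<nu>_def)
  have space\<nu>: "space \<nu> = space borelI" by (simp add: \<nu>_def)
  have em: "emeasure \<nu> A = mix A" if A: "A \<in> sets borelI" for A
    unfolding \<nu>_def
  proof (rule emeasure_measure_of_sigma[OF sets.sigma_algebra_axioms _ _ A])
    show "positive (sets borelI) mix" by (simp add: positive_def mix_def)
    show "countably_additive (sets borelI) mix"
    proof (rule countably_additiveI)
      fix F :: "nat \<Rightarrow> real set" assume F: "range F \<subseteq> sets borelI" "disjoint_family F"
      have "(\<Sum>i. mix (F i)) = (\<Sum>q\<in>Ob. \<Sum>i. ennreal (w q) * emeasure (N q) (F i))"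
        unfolding mix_def by (rule suminf_sum) simp
      also have "\<dots> = (\<Sum>q\<in>Ob. ennreal (w q) * emeasure (N q) (\<Union>i. F i))"
      proof (rule sum.cong[OF refl])
        fix q assume q: "q \<in> Ob"
        have "(\<Sum>i. emeasure (N q) (F i)) = emeasure (N q) (\<Union>i. F i)"
          using F Ns[OF q] by (intro suminf_emeasure) auto
        then show "(\<Sum>i. ennreal (w q) * emeasure (N q) (F i)) = ennreal (w q) * emeasure (N q) (\<Union>i. F i)"
          by simp
      qed
      finally show "(\<Sum>i. mix (F i)) = mix (\<Union>i. F i)" by (simp add: mix_def)
    qed
  qed
  have mixr: "mix A = ennreal (\<Sum>q\<in>Ob. w q * measure (N q) A)" for A
  proof -
    have "mix A = (\<Sum>q\<in>Ob. ennreal (w q * measure (N q) A))"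
      unfolding mix_def
    proof (rule sum.cong[OF refl])
      fix q assume q: "q \<in> Ob"
      interpret prob_space "N q" using Np[OF q] .
      show "ennreal (w q) * emeasure (N q) A = ennreal (w q * measure (N q) A)"
        by (simp add: emeasure_eq_measure ennreal_mult wpos[OF q])
    qed
    also have "\<dots> = ennreal (\<Sum>q\<in>Ob. w q * measure (N q) A)"
      by (rule sum_ennreal) (simp add: wpos)
    finally show ?thesis .
  qed
  have me: "measure \<nu> A = (\<Sum>q\<in>Ob. w q * measure (N q) A)" if A: "A \<in> sets borelI" for A
    using em[OF A] mixr[of A] by (simp add: measure_def sum_nonneg wpos)
  have "emeasure \<nu> (space \<nu>) = 1"
  proof -
    have "(\<Sum>q\<in>Ob. w q * measure (N q) (space borelI)) = (\<Sum>q\<in>Ob. w q)"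
    proof (rule sum.cong[OF refl])
      fix q assume q: "q \<in> Ob"
      interpret prob_space "N q" using Np[OF q] .
      have "space (N q) = space borelI" using Ns[OF q] by (rule sets_eq_imp_space_eq)
      then show "w q * measure (N q) (space borelI) = w q" using prob_space by simp
    qed
    then show ?thesis using em[of "space borelI"] mixr[of "space borelI"] space\<nu> wsum by simp
  qed
  then have "prob_space \<nu>" by (rule prob_spaceI)
  then show ?thesis using sets\<nu> me by (auto simp: is_prob_I_def)
qed


lemma inI: "S \<subseteq> unitI \<Longrightarrow> S \<in> sets borel \<Longrightarrow> S \<in> sets borelI"
  by (subst sets_restrict_space_iff) (auto simp: unitI_def)

lemma space_borelI[simp]: "space borelI = unitI"
  by (simp add: space_restrict_space)

lemma Bnbhd_sets: "Bnbhd A d \<in> sets borelI"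
proof (rule inI)
  have "Bnbhd A d = unitI \<inter> (\<Union>a\<in>A. ball a d)"
    by (auto simp: Bnbhd_def dist_real_def abs_minus_commute)
  moreover have "unitI \<inter> (\<Union>a\<in>A. ball a d) \<in> sets borel"
    by (intro sets.Int borel_closed borel_open) (auto simp: unitI_def)
  ultimately show "Bnbhd A d \<in> sets borel" by simp
qed (auto simp: Bnbhd_def)

lemma funpow_comp2: "(f ^^ a) ((f ^^ b) y) = (f ^^ (a + b)) y"
  by (simp add: funpow_add)

lemma funpow_mult_per: "(f ^^ k) x = x \<Longrightarrow> (f ^^ (q * k)) x = x"
proof (induct q)
  case (Suc q)
  then show ?case using funpow_comp2[where f=f and a=k and b="q*k" and y=x] by (simp add: add.commute)
qed simp

lemma funpow_mod: "(f ^^ k) x = x \<Longrightarrow> (f ^^ n) x = (f ^^ (n mod k)) x"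
proof -
  assume h: "(f ^^ k) x = x"
  have "(f ^^ n) x = (f ^^ (n mod k + n div k * k)) x" by simp
  also have "\<dots> = (f ^^ (n mod k)) ((f ^^ (n div k * k)) x)" by (simp only: funpow_comp2)
  also have "\<dots> = (f ^^ (n mod k)) x" using funpow_mult_per[OF h] by simp
  finally show ?thesis .
qed

lemma funpow_unitI: "f ` unitI \<subseteq> unitI \<Longrightarrow> y \<in> unitI \<Longrightarrow> (f ^^ n) y \<in> unitI"
  by (induct n) auto

lemma orbit_Per:
  assumes fI: "f ` unitI \<subseteq> unitI" and k: "k \<ge> 1" and x: "x \<in> Per f k"
  shows "orbit f x \<subseteq> Per f k" "finite (orbit f x)"
proof -
  have xI: "x \<in> unitI" and xk: "(f ^^ k) x = x" and xmin: "\<And>j. 1 \<le> j \<Longrightarrow> j < k \<Longrightarrow> (f ^^ j) x \<noteq> x"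
    using x by (auto simp: Per_def)
  have sub: "orbit f x \<subseteq> (\<lambda>i. (f ^^ i) x) ` {..<k}"
  proof
    fix y assume "y \<in> orbit f x"
    then obtain n where "y = (f ^^ n) x" by (auto simp: orbit_def)
    then have "y = (f ^^ (n mod k)) x" using funpow_mod[OF xk] by simp
    moreover have "n mod k < k" using k by simp
    ultimately show "y \<in> (\<lambda>i. (f ^^ i) x) ` {..<k}" by blast
  qed
  then show "finite (orbit f x)" by (rule finite_subset) simp
  have "(f ^^ i) x \<in> Per f k" if i: "i < k" for i
  proof -
    have "(f ^^ i) x \<in> unitI" using funpow_unitI[OF fI xI] .
    moreover have "(f ^^ k) ((f ^^ i) x) = (f ^^ i) x"
      using funpow_comp2[where f=f and a=k and b=i and y=x] funpow_comp2[where f=f and a=i and b=k and y=x] xk by (simp add: add.commute)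
    moreover have "(f ^^ j) ((f ^^ i) x) \<noteq> (f ^^ i) x" if j: "1 \<le> j" "j < k" for j
    proof
      assume eq: "(f ^^ j) ((f ^^ i) x) = (f ^^ i) x"
      have "(f ^^ (k - i)) ((f ^^ j) ((f ^^ i) x)) = (f ^^ (k - i)) ((f ^^ i) x)" using eq by simp
      then have "(f ^^ (k - i + (j + i))) x = (f ^^ (k - i + i)) x" by (simp add: funpow_comp2)
      moreover have "k - i + (j + i) = j + k" "k - i + i = k" using i by auto
      ultimately have "(f ^^ (j + k)) x = (f ^^ k) x" by simp
      then have "(f ^^ j) x = x" using funpow_comp2[where f=f and a=j and b=k and y=x] xk by simp
      then show False using xmin j by blast
    qed
    ultimately show ?thesis by (auto simp: Per_def)
  qed
  then show "orbit f x \<subseteq> Per f k" using sub by auto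
qed


theorem mainTheorem5:
  fixes f :: "real \<Rightarrow> real" and k :: nat and x e :: real and \<mu> :: "real measure"
  assumes "continuous_on unitI f" and "f ` unitI \<subseteq> unitI"
    and "k \<ge> 1"
    and "cantor_set (Per f k)"
    and "x \<in> Per f k" and "e > 0"
    and "is_prob_I \<mu>" and "f_invariant f \<mu>" and "measure \<mu> (orbit f x) = 1"
  shows "\<exists>\<nu>. is_prob_I \<nu> \<and> (\<forall>y. measure \<nu> {y} = 0) \<and> measure \<nu> (Per f k) = 1
              \<and> prohorov \<mu> \<nu> < e"
proof -
  note fI = assms(2) and k = assms(3) and cs = assms(4) and x = assms(5) and e = assms(6)
  define K where "K = Per f k"
  define Ob where "Ob = orbit f x"
  define \<delta> where "\<delta> = e / 2"
  have \<delta>: "\<delta> > 0" "\<delta> < e" using e by (auto simp: \<delta>_def)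
  have Kc: "closed K" using cs by (auto simp: cantor_set_def K_def compact_imp_closed)
  have Kp: "\<forall>y\<in>K. y islimpt K" using cs by (auto simp: cantor_set_def K_def)
  have KI: "K \<subseteq> unitI" by (auto simp: K_def Per_def)
  have KS: "K \<in> sets borelI" using KI Kc by (intro inI borel_closed)
  have ObK: "Ob \<subseteq> K" and Obf: "finite Ob" using orbit_Per[OF fI k x] by (auto simp: Ob_def K_def)
  have ObS: "S \<in> sets borelI" if "S \<subseteq> Ob" for S
    using that ObK KI finite_subset[OF that Obf] by (intro inI borel_closed finite_imp_closed) auto
  interpret M: prob_space \<mu> using assms(7) by (simp add: is_prob_I_def)
  have sM: "sets \<mu> = sets borelI" using assms(7) by (simp add: is_prob_I_def)
  have spM: "space \<mu> = unitI" using sets_eq_imp_space_eq[OF sM] by simp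
  define w where "w q = measure \<mu> {q}" for q
  have wpos: "w q \<ge> 0" for q by (simp add: w_def)
  have muA: "measure \<mu> A = (\<Sum>q\<in>Ob. if q \<in> A then w q else 0)" if A: "A \<in> sets borelI" for A
  proof -
    have AM: "A \<in> sets \<mu>" using A sM by simp
    have AOb: "A \<inter> Ob \<in> sets \<mu>" using ObS[of "A \<inter> Ob"] sM by simp
    have ObM: "Ob \<in> sets \<mu>" using ObS[of Ob] sM by simp
    have AmOb: "A - Ob \<in> sets \<mu>" using AM ObM by (rule sets.Diff)
    have "A - Ob \<subseteq> space \<mu> - Ob" using sets.sets_into_space[OF AM] by blast
    then have "measure \<mu> (A - Ob) \<le> measure \<mu> (space \<mu> - Ob)"
      using ObM by (intro M.finite_measure_mono) auto
    also have "\<dots> = 0" using M.prob_compl[OF ObM] assms(9) by (simp add: Ob_def)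
    finally have z: "measure \<mu> (A - Ob) = 0" using measure_nonneg[of \<mu> "A - Ob"] by linarith
    have "measure \<mu> A = measure \<mu> ((A \<inter> Ob) \<union> (A - Ob))" by (metis Int_Diff_Un)
    also have "\<dots> = measure \<mu> (A \<inter> Ob) + measure \<mu> (A - Ob)"
      by (rule M.finite_measure_Union[OF AOb AmOb]) auto
    also have "measure \<mu> (A \<inter> Ob) = (\<Sum>q\<in>A \<inter> Ob. w q)"
      unfolding w_def
      by (rule measure_eq_sum_singleton) (use Obf ObS sM in auto)
    also have "\<dots> = (\<Sum>q\<in>Ob. if q \<in> A then w q else 0)"
      using sum.inter_restrict[OF Obf, of w A] by (metis Int_commute)
    finally show ?thesis using z by simp
  qed
  have wsum: "sum w Ob = 1"
    using muA[OF ObS[OF order_refl]] assms(9) by (simp add: Ob_def)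
  have "\<forall>q\<in>Ob. \<exists>\<phi>. \<phi> \<in> borel_measurable Om \<and> inj \<phi> \<and> (\<forall>w. \<phi> w \<in> K \<and> dist (\<phi> w) q < \<delta>)"
    using cantor_embed[OF Kc Kp _ \<delta>(1)] ObK by blast
  then obtain \<Phi> where \<Phi>: "\<And>q. q \<in> Ob \<Longrightarrow> \<Phi> q \<in> borel_measurable Om \<and> inj (\<Phi> q) \<and> (\<forall>w. \<Phi> q w \<in> K \<and> dist (\<Phi> q w) q < \<delta>)"
    using bchoice by metis
  define N where "N q = distr Om borelI (\<Phi> q)" for q
  have \<Phi>m: "\<Phi> q \<in> measurable Om borelI" if q: "q \<in> Ob" for q
    using \<Phi>[OF q] KI by (intro measurable_restrict_space2) auto
  interpret O: prob_space Om by (rule prob_Om)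
  have Np: "prob_space (N q)" if "q \<in> Ob" for q
    unfolding N_def using \<Phi>m[OF that] by (rule O.prob_space_distr)
  have Ns: "sets (N q) = sets borelI" for q by (simp add: N_def)
  have Nm: "measure (N q) A = measure Om (\<Phi> q -` A)" if "q \<in> Ob" "A \<in> sets borelI" for q A
    unfolding N_def using measure_distr[OF \<Phi>m[OF that(1)] that(2)] by simp
  have N1: "measure (N q) A = 1" if "q \<in> Ob" "A \<in> sets borelI" "\<forall>w. \<Phi> q w \<in> A" for q A
  proof -
    have "\<Phi> q -` A = UNIV" using that(3) by auto
    then show ?thesis using Nm[OF that(1,2)] O.prob_space by simp
  qed
  have N0: "measure (N q) A = 0" if "q \<in> Ob" "A \<in> sets borelI" "\<forall>w. \<Phi> q w \<notin> A" for q A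
  proof -
    have "\<Phi> q -` A = {}" using that(3) by auto
    then show ?thesis using Nm[OF that(1,2)] by simp
  qed
  have Nle: "measure (N q) A \<le> 1" if "q \<in> Ob" for q A
    using prob_space.prob_le_1[OF Np[OF that]] .
  have Nsing: "measure (N q) {y} = 0" if q: "q \<in> Ob" and y: "{y} \<in> sets borelI" for q y
  proof (cases "\<exists>w0. \<Phi> q w0 = y")
    case True
    then obtain w0 where "\<Phi> q w0 = y" by blast
    then have "\<Phi> q -` {y} = {w0}" using \<Phi>[OF q] by (auto dest: injD)
    then show ?thesis using Nm[OF q y] Om_single by simp
  next
    case False then show ?thesis using N0[OF q y] by auto
  qed
  obtain \<nu> where \<nu>: "is_prob_I \<nu>" and \<nu>m: "\<And>A. A \<in> sets borelI \<Longrightarrow> measure \<nu> A = (\<Sum>q\<in>Ob. w q * measure (N q) A)"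
  proof -
    have "\<exists>\<nu>. is_prob_I \<nu> \<and> (\<forall>A \<in> sets borelI. measure \<nu> A = (\<Sum>q\<in>Ob. w q * measure (N q) A))"
      by (rule mixture[OF Obf wpos wsum]) (auto intro: Np simp: Ns)
    then show ?thesis using that by blast
  qed
  have s\<nu>: "sets \<nu> = sets borelI" using \<nu> by (simp add: is_prob_I_def)
  have sing: "measure \<nu> {y} = 0" for y
  proof (cases "{y} \<in> sets borelI")
    case True then show ?thesis using \<nu>m[OF True] Nsing by simp
  next
    case False then show ?thesis using s\<nu> by (simp add: measure_notin_sets)
  qed
  have perK: "measure \<nu> (Per f k) = 1"
  proof -
    have "measure \<nu> K = (\<Sum>q\<in>Ob. w q * measure (N q) K)" using \<nu>m[OF KS] .
    also have "\<dots> = (\<Sum>q\<in>Ob. w q)"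
      by (intro sum.cong refl) (use N1 KS \<Phi> in auto)
    finally show ?thesis using wsum by (simp add: K_def)
  qed
  have inS: "\<delta> \<in> {e. e > 0 \<and> (\<forall>A \<in> sets borelI.
       measure \<mu> A \<le> measure \<nu> (Bnbhd A e) + e \<and> measure \<nu> A \<le> measure \<mu> (Bnbhd A e) + e)}"
  proof (intro CollectI conjI ballI)
    show "\<delta> > 0" by fact
    fix A assume A: "A \<in> sets borelI"
    define B where "B = Bnbhd A \<delta>"
    have BS: "B \<in> sets borelI" by (simp add: B_def Bnbhd_sets)
    have "measure \<mu> A = (\<Sum>q\<in>Ob. if q \<in> A then w q else 0)" using muA[OF A] .
    also have "\<dots> \<le> (\<Sum>q\<in>Ob. w q * measure (N q) B)"
    proof (rule sum_mono)
      fix q assume q: "q \<in> Ob"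
      show "(if q \<in> A then w q else 0) \<le> w q * measure (N q) B"
      proof (cases "q \<in> A")
        case True
        have "\<forall>w. \<Phi> q w \<in> B"
          using \<Phi>[OF q] KI True by (auto simp: B_def Bnbhd_def dist_real_def)
        then show ?thesis using N1[OF q BS] True by simp
      qed (simp add: wpos)
    qed
    also have "\<dots> = measure \<nu> B" using \<nu>m[OF BS] by simp
    finally show "measure \<mu> A \<le> measure \<nu> (Bnbhd A \<delta>) + \<delta>" using \<delta> by (simp add: B_def)
    have "measure \<nu> A = (\<Sum>q\<in>Ob. w q * measure (N q) A)" using \<nu>m[OF A] .
    also have "\<dots> \<le> (\<Sum>q\<in>Ob. if q \<in> B then w q else 0)"
    proof (rule sum_mono)
      fix q assume q: "q \<in> Ob"
      show "w q * measure (N q) A \<le> (if q \<in> B then w q else 0)"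
      proof (cases "q \<in> B")
        case True
        then show ?thesis using Nle[OF q, of A] wpos[of q] by (simp add: mult_left_le)
      next
        case False
        have "\<forall>w. \<Phi> q w \<notin> A"
        proof (intro allI notI)
          fix w assume wA: "\<Phi> q w \<in> A"
          have d: "\<bar>q - \<Phi> q w\<bar> < \<delta>" using \<Phi>[OF q] by (auto simp: dist_real_def abs_minus_commute)
          have "q \<in> unitI" using q ObK KI by auto
          then have "q \<in> B" using wA d unfolding B_def Bnbhd_def by blast
          then show False using False by simp
        qed
        then show ?thesis using N0[OF q A] False by simp
      qed
    qed
    also have "\<dots> = measure \<mu> B" using muA[OF BS] by simp
    finally show "measure \<nu> A \<le> measure \<mu> (Bnbhd A \<delta>) + \<delta>" using \<delta> by (simp add: B_def)
  qed
  have "prohorov \<mu> \<nu> \<le> \<delta>"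
    unfolding prohorov_def by (rule cInf_lower[OF inS]) (auto intro: bdd_belowI[of _ 0])
  then show ?thesis using \<nu> sing perK \<delta> by auto
qed

end
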